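(* Let $d\ge2$ and $\overrightarrow{w}\in(0,\infty)^d$. There exists a $\overrightarrow{w}$-CM random vector $\overrightarrow{U}=(U_1,\dots,U_d)$ with uniform$[0,1]$ marginals (equivalently, a $\overrightarrow{w}$-CM $d$-dimensional copula) if and only if $$\max\{w_1,\dots,w_d\}\le\sum_{i=1}^dw_i-\max\{w_1,\dots,w_d\}.$$
   Context: A random vector $\overrightarrow{U}=(U_1,\dots,U_d)$ with each $U_i$ uniform on $[0,1]$ is $\overrightarrow{w}$-CM if $P\left(\sum_{i=1}^d w_iU_i=\frac12\sum_{i=1}^d w_i\right)=1$; its distribution function (a copula) is then called $\overrightarrow{w}$-CM. *)

theory Defs
  imports "HOL-Probability.Probability"
begin

text \<open>A probability law on (nat => real), living on the product space indexed by
  {..<d}, is the joint law of a random vector (U_0,...,U_(d-1)).\<close>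

definition w_CM_law :: "nat \<Rightarrow> (nat \<Rightarrow> real) \<Rightarrow> (nat \<Rightarrow> real) measure \<Rightarrow> bool" where
  "w_CM_law d w M \<longleftrightarrow>
     prob_space M \<and>
     sets M = sets (PiM {..<d} (\<lambda>_. borel)) \<and>
     (\<forall>i<d. distr M borel (\<lambda>x. x i) = uniform_measure lborel {0..1}) \<and>
     (AE x in M. (\<Sum>i<d. w i * x i) = (\<Sum>i<d. w i) / 2)"

end

theory Submission
  imports Defs
begin


lemma arcsin_nn:
  "(\<integral>\<^sup>+z. ennreal (1 / sqrt (1 - z\<^sup>2)) * indicator {-1<..<1} z \<partial>lborel) = ennreal pi"
proof -
  let ?f = "\<lambda>z::real. 1 / sqrt (1 - z\<^sup>2)"
  have p1: "ereal (-1) < ereal 1" by simp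
  have p2: "DERIV arcsin x :> ?f x" if x: "ereal (-1) < ereal x" "ereal x < ereal 1" for x
  proof -
    have x': "-1 < x" "x < 1" using x by auto
    show ?thesis using DERIV_arcsin[OF x'] by (simp add: divide_inverse)
  qed
  have p3: "isCont ?f x" if x: "ereal (-1) < ereal x" "ereal x < ereal 1" for x
  proof -
    have x': "-1 < x" "x < 1" using x by auto
    then have "1 - x\<^sup>2 > 0" by (simp add: abs_less_iff abs_square_less_1)
    then show ?thesis by (intro continuous_intros) auto
  qed
  have p4: "AE x in lborel. ereal (-1) < ereal x \<longrightarrow> ereal x < ereal 1 \<longrightarrow> 0 \<le> ?f x"
    by (auto simp: abs_square_less_1 less_imp_le)
  have c: "continuous_on {-1..1} arcsin" by (rule continuous_on_arcsin') 
  have p5: "((arcsin \<circ> real_of_ereal) \<longlongrightarrow> - (pi/2)) (at_right (ereal (-1)))"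
    unfolding ereal_tendsto_simps1 
    using c[unfolded continuous_on_def, rule_format, of "-1"]
    by (auto simp: at_within_Icc_at_right dest: tendsto_within_subset[where T="{-1<..}"])
  have p6: "((arcsin \<circ> real_of_ereal) \<longlongrightarrow> pi/2) (at_left (ereal 1))"
    unfolding ereal_tendsto_simps1
    using c[unfolded continuous_on_def, rule_format, of "1"]
    by (auto simp: at_within_Icc_at_left)
  note A = interval_integral_FTC_nonneg[OF p1 p2 p3 p4 p5 p6]
  have B: "integral {-1<..<1} ?f = pi"
    using interval_integral_eq_integral'[of "ereal (-1)" "ereal 1" ?f] A by simp
  have "?f integrable_on {-1<..<1}" using set_borel_integral_eq_integral(1)[OF A(1)] by simp
  then have "(?f has_integral pi) {-1<..<1}" using B by (simp add: has_integral_iff)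
  then show ?thesis
    by (subst nn_integral_has_integral_lebesgue') (auto simp: abs_square_less_1 less_imp_le)
qed



definition gd :: "real \<times> real \<Rightarrow> real" where
  "gd q = (if (fst q)\<^sup>2 + (snd q)\<^sup>2 < 1 then 1 / (2 * pi * sqrt (1 - (fst q)\<^sup>2 - (snd q)\<^sup>2)) else 0)"

lemma gd_nonneg: "0 \<le> gd q"
  by (auto simp: gd_def)

lemma gd_meas[measurable]: "gd \<in> borel_measurable borel"
  unfolding gd_def borel_prod[symmetric] by measurable

lemma gd_fiber:
  fixes x :: real
  shows "(\<integral>\<^sup>+y. ennreal (gd (x, y)) \<partial>lborel) = ennreal (1/2) * indicator {-1<..<1} x"
proof (cases "\<bar>x\<bar> < 1")
  case False
  then have "gd (x, y) = 0" for y
    using abs_square_less_1[of x] by (auto simp: gd_def not_less intro: order.trans[OF _ add_increasing2[OF zero_le_power2 order.refl]])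
  then show ?thesis using False by (auto simp: indicator_def)
next
  case True
  define r where "r = sqrt (1 - x\<^sup>2)"
  have x2: "x\<^sup>2 < 1" using True by (simp add: abs_square_less_1)
  have r: "r > 0" "r\<^sup>2 = 1 - x\<^sup>2" using x2 by (auto simp: r_def)
  have "(\<integral>\<^sup>+y. ennreal (gd (x, y)) \<partial>lborel) = ennreal \<bar>r\<bar> * (\<integral>\<^sup>+z. ennreal (gd (x, 0 + r * z)) \<partial>lborel)"
    by (rule nn_integral_real_affine) (use r in auto)
  also have "(\<lambda>z. ennreal (gd (x, 0 + r * z))) = (\<lambda>z. ennreal (1/(2*pi*r)) * (ennreal (1 / sqrt (1 - z\<^sup>2)) * indicator {-1<..<1} z))"
  proof
    fix z :: real
    have e1: "x\<^sup>2 + (r*z)\<^sup>2 < 1 \<longleftrightarrow> z\<^sup>2 < 1"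
    proof -
      have "x\<^sup>2 + (r*z)\<^sup>2 < 1 \<longleftrightarrow> r\<^sup>2 * z\<^sup>2 < r\<^sup>2 * 1" using r by (simp add: power_mult_distrib) linarith
      also have "\<dots> \<longleftrightarrow> z\<^sup>2 < 1" using r x2 by (intro mult_less_cancel_left_pos) simp
      finally show ?thesis .
    qed
    have e2: "1 - x\<^sup>2 - (r*z)\<^sup>2 = r\<^sup>2 * (1 - z\<^sup>2)" using r by (simp add: power_mult_distrib algebra_simps)
    have e3: "sqrt (r\<^sup>2 * (1 - z\<^sup>2)) = r * sqrt (1 - z\<^sup>2)" using r(1) by (simp add: real_sqrt_mult)
    show "ennreal (gd (x, 0 + r * z)) = ennreal (1/(2*pi*r)) * (ennreal (1 / sqrt (1 - z\<^sup>2)) * indicator {-1<..<1} z)"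
    proof (cases "z\<^sup>2 < 1")
      case True
      then have "\<bar>z\<bar> < 1" by (simp add: abs_square_less_1)
      then have "z \<in> {-1<..<1}" by (simp add: abs_less_iff)
      have g1: "gd (x, 0 + r * z) = 1 / (2*pi * sqrt (1 - x\<^sup>2 - (r*z)\<^sup>2))"
        unfolding gd_def fst_conv snd_conv add_0 using True e1 by simp
      also have "\<dots> = 1/(2*pi*r) * (1 / sqrt (1 - z\<^sup>2))" unfolding e2 e3 by simp
      finally show ?thesis using \<open>z \<in> {-1<..<1}\<close> r True
        by (simp add: ennreal_mult'[symmetric] del: ennreal_mult' ennreal_mult'')
    next
      case False
      then have "\<not> \<bar>z\<bar> < 1" by (simp add: abs_square_less_1)
      then have "z \<notin> {-1<..<1}" by (auto simp: abs_less_iff)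
      then show ?thesis using False by (simp add: gd_def e1)
    qed
  qed
  also have "(\<integral>\<^sup>+z. ennreal (1/(2*pi*r)) * (ennreal (1 / sqrt (1 - z\<^sup>2)) * indicator {-1<..<1} z) \<partial>lborel) 
      = ennreal (1/(2*pi*r)) * ennreal pi"
    by (subst nn_integral_cmult) (auto simp: arcsin_nn)
  finally show ?thesis using True r
    by (simp add: indicator_def abs_less_iff ennreal_mult'[symmetric] del: ennreal_mult' ennreal_mult'')
qed



lemma shear_x_nn:
  fixes h :: "real \<times> real \<Rightarrow> ennreal"
  assumes [measurable]: "h \<in> borel_measurable borel"
  shows "(\<integral>\<^sup>+p. h (fst p + a * snd p, snd p) \<partial>lborel) = (\<integral>\<^sup>+p. h p \<partial>lborel)"
proof -
  have hm[measurable]: "h \<in> borel_measurable (lborel \<Otimes>\<^sub>M lborel)"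
    using assms by (simp add: lborel_prod measurable_lborel1)
  have "(\<integral>\<^sup>+p. h (fst p + a * snd p, snd p) \<partial>lborel) = (\<integral>\<^sup>+p. h (fst p + a * snd p, snd p) \<partial>(lborel \<Otimes>\<^sub>M lborel))"
    by (simp add: lborel_prod)
  also have "\<dots> = (\<integral>\<^sup>+y. \<integral>\<^sup>+x. h (x + a * y, y) \<partial>lborel \<partial>lborel)"
    by (subst lborel_pair.nn_integral_snd[symmetric]) auto
  also have "\<dots> = (\<integral>\<^sup>+y. \<integral>\<^sup>+x. h (x, y) \<partial>lborel \<partial>lborel)"
  proof (rule nn_integral_cong)
    fix y :: real
    show "(\<integral>\<^sup>+x. h (x + a * y, y) \<partial>lborel) = (\<integral>\<^sup>+x. h (x, y) \<partial>lborel)"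
      using nn_integral_real_affine[of "\<lambda>x. h (x, y)" 1 "a * y"] by (simp add: add.commute)
  qed
  also have "\<dots> = (\<integral>\<^sup>+p. h p \<partial>(lborel \<Otimes>\<^sub>M lborel))"
    by (subst lborel_pair.nn_integral_snd) auto
  finally show ?thesis by (simp add: lborel_prod)
qed

lemma shear_y_nn:
  fixes h :: "real \<times> real \<Rightarrow> ennreal"
  assumes [measurable]: "h \<in> borel_measurable borel"
  shows "(\<integral>\<^sup>+p. h (fst p, snd p + b * fst p) \<partial>lborel) = (\<integral>\<^sup>+p. h p \<partial>lborel)"
proof -
  have hm[measurable]: "h \<in> borel_measurable (lborel \<Otimes>\<^sub>M lborel)"
    using assms by (simp add: lborel_prod measurable_lborel1)
  have "(\<integral>\<^sup>+p. h (fst p, snd p + b * fst p) \<partial>lborel) = (\<integral>\<^sup>+p. h (fst p, snd p + b * fst p) \<partial>(lborel \<Otimes>\<^sub>M lborel))"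
    by (simp add: lborel_prod)
  also have "\<dots> = (\<integral>\<^sup>+x. \<integral>\<^sup>+y. h (x, y + b * x) \<partial>lborel \<partial>lborel)"
    by (subst lborel.nn_integral_fst[symmetric]) auto
  also have "\<dots> = (\<integral>\<^sup>+x. \<integral>\<^sup>+y. h (x, y) \<partial>lborel \<partial>lborel)"
  proof (rule nn_integral_cong)
    fix x :: real
    show "(\<integral>\<^sup>+y. h (x, y + b * x) \<partial>lborel) = (\<integral>\<^sup>+y. h (x, y) \<partial>lborel)"
      using nn_integral_real_affine[of "\<lambda>y. h (x, y)" 1 "b * x"] by (simp add: add.commute)
  qed
  also have "\<dots> = (\<integral>\<^sup>+p. h p \<partial>(lborel \<Otimes>\<^sub>M lborel))"
    by (subst lborel.nn_integral_fst) auto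
  finally show ?thesis by (simp add: lborel_prod)
qed

definition Sx :: "real \<Rightarrow> real \<times> real \<Rightarrow> real \<times> real" where
  "Sx a p = (fst p + a * snd p, snd p)"
definition Sy :: "real \<Rightarrow> real \<times> real \<Rightarrow> real \<times> real" where
  "Sy b p = (fst p, snd p + b * fst p)"
definition rot :: "real \<Rightarrow> real \<Rightarrow> real \<times> real \<Rightarrow> real \<times> real" where
  "rot c s p = (c * fst p + s * snd p, - s * fst p + c * snd p)"

lemma Sx_meas[measurable]: "Sx a \<in> borel_measurable borel"
  unfolding Sx_def by (intro borel_measurable_continuous_onI continuous_intros)
lemma Sy_meas[measurable]: "Sy a \<in> borel_measurable borel"
  unfolding Sy_def by (intro borel_measurable_continuous_onI continuous_intros)
lemma rot_meas[measurable]: "rot c s \<in> borel_measurable borel"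
  unfolding rot_def by (intro borel_measurable_continuous_onI continuous_intros)

lemma distr_inv_from_nn:
  fixes f :: "real \<times> real \<Rightarrow> real \<times> real"
  assumes fm: "f \<in> borel_measurable borel"
    and nn: "\<And>h. h \<in> borel_measurable borel \<Longrightarrow> (\<integral>\<^sup>+p. h (f p) \<partial>lborel) = (\<integral>\<^sup>+p. h p \<partial>lborel)"
  shows "distr lborel borel f = lborel"
proof (rule measure_eqI)
  show "sets (distr lborel borel f) = sets lborel" by simp
  fix A assume A: "A \<in> sets (distr lborel borel f)"
  then have Ab: "A \<in> sets borel" by simp
  have fm': "f \<in> measurable lborel borel" using fm by (simp add: measurable_lborel1)
  have "emeasure (distr lborel borel f) A = (\<integral>\<^sup>+p. indicator A p \<partial>distr lborel borel f)"
    using A by simp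
  also have "\<dots> = (\<integral>\<^sup>+p. indicator A (f p) \<partial>lborel)"
    using Ab fm' by (subst nn_integral_distr) auto
  also have "\<dots> = (\<integral>\<^sup>+p. indicator A p \<partial>lborel)"
    using Ab by (intro nn) auto
  finally show "emeasure (distr lborel borel f) A = emeasure lborel A" using Ab by simp
qed

lemma Sx_inv: "distr lborel borel (Sx a) = lborel"
  by (rule distr_inv_from_nn) (auto simp: Sx_def intro: shear_x_nn)
lemma Sy_inv: "distr lborel borel (Sy a) = lborel"
  by (rule distr_inv_from_nn) (auto simp: Sy_def intro: shear_y_nn)

lemma distr_comp_inv:
  fixes f g :: "real \<times> real \<Rightarrow> real \<times> real"
  assumes [measurable]: "f \<in> borel_measurable borel" "g \<in> borel_measurable borel"
    and "distr lborel borel f = lborel" "distr lborel borel g = lborel"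
  shows "distr lborel borel (f \<circ> g) = lborel"
proof -
  have "distr lborel borel (f \<circ> g) = distr (distr lborel borel g) borel f"
    by (subst distr_distr) (auto simp: measurable_lborel1)
  then show ?thesis using assms by simp
qed

lemma rot_shear:
  assumes "c\<^sup>2 + s\<^sup>2 = 1" "c \<noteq> -1"
  shows "rot c s = Sx (s/(1+c)) \<circ> Sy (-s) \<circ> Sx (s/(1+c))"
proof
  fix p :: "real \<times> real"
  have c1: "1 + c \<noteq> 0" using assms by auto
  have e1: "1 + s / (1+c) * (-s) = c"
    using c1 assms by (simp add: field_simps power2_eq_square)
  have e2: "s / (1 + c) * (1 + s / (1+c) * (-s)) + s / (1+c) = s"
  proof -
    have "s / (1 + c) * c + s / (1+c) = s/(1+c) * (1+c)" by (simp add: distrib_left)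
    then show ?thesis unfolding e1 using c1 by simp
  qed
  define t where "t = s/(1+c)"
  have f1: "c = 1 - t * s" using e1 unfolding t_def by simp
  have f2: "s = t*(1 - t * s) + t" using e2 f1 unfolding t_def by simp
  have "fst (rot c s p) = fst ((Sx t \<circ> Sy (-s) \<circ> Sx t) p)"
    unfolding rot_def Sx_def Sy_def comp_def fst_conv snd_conv using f1 f2 by algebra
  moreover have "snd (rot c s p) = snd ((Sx t \<circ> Sy (-s) \<circ> Sx t) p)"
    unfolding rot_def Sx_def Sy_def comp_def fst_conv snd_conv using f1 f2 by algebra
  ultimately show "rot c s p = (Sx (s/(1+c)) \<circ> Sy (-s) \<circ> Sx (s/(1+c))) p"
    unfolding t_def by (simp add: prod_eq_iff)
qed

lemma rot_inv_aux:
  assumes "c\<^sup>2 + s\<^sup>2 = 1" "c \<noteq> -1"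
  shows "distr lborel borel (rot c s) = lborel"
  unfolding rot_shear[OF assms]
  by (intro distr_comp_inv Sx_inv Sy_inv) (auto simp: comp_def)

lemma rot_inv:
  assumes "c\<^sup>2 + s\<^sup>2 = 1"
  shows "distr lborel borel (rot c s) = lborel"
proof (cases "c = -1")
  case False then show ?thesis using rot_inv_aux[OF assms] by simp
next
  case True
  then have s: "s = 0" using assms by simp
  have "rot c s = rot 0 1 \<circ> rot 0 1" using True s by (auto simp: rot_def)
  then show ?thesis
    using rot_inv_aux[of 0 1] by (auto intro!: distr_comp_inv)
qed



definition PP :: "(real \<times> real) measure" where
  "PP = density lborel (\<lambda>q. ennreal (gd q))"

lemma sets_PP[simp]: "sets PP = sets borel" by (simp add: PP_def)
lemma space_PP[simp]: "space PP = UNIV" by (simp add: PP_def)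

lemma meas_PP: "f \<in> measurable borel N \<Longrightarrow> f \<in> measurable PP N"
  using measurable_cong_sets[OF sets_PP refl, of N] by simp

lemma PP_marg:
  "distr PP borel (\<lambda>q. 1/2 + fst q / 2) = uniform_measure lborel {0..1}"
proof (rule measure_eqI)
  show "sets (distr PP borel (\<lambda>q. 1/2 + fst q / 2)) = sets (uniform_measure lborel {0..1})" by simp
  fix A assume "A \<in> sets (distr PP borel (\<lambda>q. 1/2 + fst q / 2))"
  then have A[measurable]: "A \<in> sets borel" by simp
  have hm[measurable]: "(\<lambda>q::real\<times>real. 1/2 + fst q / 2) \<in> borel_measurable borel"
    by (intro borel_measurable_continuous_onI continuous_intros) auto
  have "emeasure (distr PP borel (\<lambda>q. 1/2 + fst q / 2)) A
      = (\<integral>\<^sup>+q. indicator A (1/2 + fst q / 2) \<partial>PP)"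
  proof -
    have "emeasure (distr PP borel (\<lambda>q. 1/2 + fst q / 2)) A = (\<integral>\<^sup>+x. indicator A x \<partial>distr PP borel (\<lambda>q. 1/2 + fst q / 2))"
      using A by (subst nn_integral_indicator) auto
    also have "\<dots> = (\<integral>\<^sup>+q. indicator A (1/2 + fst q / 2) \<partial>PP)"
      by (rule nn_integral_distr) (auto intro: meas_PP)
    finally show ?thesis .
  qed
  also have "\<dots> = (\<integral>\<^sup>+q. ennreal (gd q) * indicator A (1/2 + fst q / 2) \<partial>lborel)"
    unfolding PP_def by (subst nn_integral_density) auto
  also have "\<dots> = (\<integral>\<^sup>+q. ennreal (gd q) * indicator A (1/2 + fst q / 2) \<partial>(lborel \<Otimes>\<^sub>M lborel))"
    by (simp add: lborel_prod)
  also have "\<dots> = (\<integral>\<^sup>+x. \<integral>\<^sup>+y. ennreal (gd (x, y)) * indicator A (1/2 + x / 2) \<partial>lborel \<partial>lborel)"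
  proof (subst lborel.nn_integral_fst[symmetric])
    show "(\<lambda>q. ennreal (gd q) * indicator A (1/2 + fst q / 2)) \<in> borel_measurable (lborel \<Otimes>\<^sub>M lborel)"
      by (simp add: lborel_prod measurable_lborel1)
  qed simp
  also have "\<dots> = (\<integral>\<^sup>+x. indicator A (1/2 + x / 2) * (ennreal (1/2) * indicator {-1<..<1} x) \<partial>lborel)"
    by (intro nn_integral_cong) (simp add: nn_integral_multc gd_fiber mult.commute)
  also have "\<dots> = (\<integral>\<^sup>+x. ennreal (1/2) * indicator ({0..1} \<inter> A) (1/2 + (1/2) * x) \<partial>lborel)"
  proof (rule nn_integral_cong_AE)
    have "AE x in lborel. x \<noteq> -1" "AE x in lborel. x \<noteq> 1" by (rule AE_lborel_singleton)+
    then show "AE x in lborel. indicator A (1/2 + x / 2) * (ennreal (1/2) * indicator {-1<..<1} x)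
       = ennreal (1/2) * indicator ({0..1} \<inter> A) (1/2 + (1/2) * x)"
      by eventually_elim (auto simp: indicator_def)
  qed
  also have "\<dots> = ennreal \<bar>1/2\<bar> * (\<integral>\<^sup>+x. indicator ({0..1} \<inter> A) (1/2 + (1/2) * x) \<partial>lborel)"
    by (subst nn_integral_cmult) auto
  also have "\<dots> = (\<integral>\<^sup>+x. indicator ({0..1} \<inter> A) x \<partial>lborel)"
    by (rule nn_integral_real_affine[symmetric]) auto
  also have "\<dots> = emeasure lborel ({0..1} \<inter> A)" by simp
  also have "\<dots> = emeasure (uniform_measure lborel {0..1}) A" by (simp add: divide_ennreal_def)
  finally show "emeasure (distr PP borel (\<lambda>q. 1/2 + fst q / 2)) A = emeasure (uniform_measure lborel {0..1}) A" .
qed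

lemma prob_space_unif01: "prob_space (uniform_measure lborel {0..1::real})"
  by (rule prob_space_uniform_measure) auto

lemma prob_space_PP: "prob_space PP"
proof
  have "emeasure PP (space PP) = emeasure (distr PP borel (\<lambda>q. 1/2 + fst q / 2)) UNIV"
    by (subst emeasure_distr) (auto intro!: meas_PP borel_measurable_continuous_onI continuous_intros)
  also have "\<dots> = 1" unfolding PP_marg by simp
  finally show "emeasure PP (space PP) = 1" .
qed

lemma gd_rot: assumes "c\<^sup>2 + s\<^sup>2 = 1" shows "gd (rot c s q) = gd q"
proof -
  have "(c * fst q + s * snd q)\<^sup>2 + (- s * fst q + c * snd q)\<^sup>2 = (c\<^sup>2 + s\<^sup>2) * ((fst q)\<^sup>2 + (snd q)\<^sup>2)"
    by (simp add: power2_eq_square algebra_simps)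
  then show ?thesis using assms by (simp add: gd_def rot_def)
qed

lemma PP_rot: assumes "c\<^sup>2 + s\<^sup>2 = 1" shows "distr PP borel (rot c s) = PP"
proof -
  have "PP = density (distr lborel borel (rot c s)) (\<lambda>q. ennreal (gd q))"
    unfolding PP_def rot_inv[OF assms] ..
  also have "\<dots> = distr (density lborel (\<lambda>q. ennreal (gd (rot c s q)))) borel (rot c s)"
    by (subst density_distr) (auto simp: measurable_lborel1)
  also have "\<dots> = distr PP borel (rot c s)"
    unfolding PP_def gd_rot[OF assms] ..
  finally show ?thesis ..
qed

lemma PP_dir:
  assumes "c\<^sup>2 + s\<^sup>2 = 1"
  shows "distr PP borel (\<lambda>q. 1/2 + (c * fst q + s * snd q) / 2) = uniform_measure lborel {0..1}"
proof -
  have "distr PP borel (\<lambda>q. 1/2 + (c * fst q + s * snd q) / 2)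
      = distr (distr PP borel (rot c s)) borel (\<lambda>q. 1/2 + fst q / 2)"
    by (subst distr_distr) (auto simp: comp_def rot_def intro!: meas_PP borel_measurable_continuous_onI continuous_intros)
  then show ?thesis unfolding PP_rot[OF assms] PP_marg .
qed



lemma greedy_partition:
  fixes w :: "nat \<Rightarrow> real"
  assumes "finite J" "\<And>i. i \<in> J \<Longrightarrow> 0 \<le> w i \<and> w i \<le> K" "0 \<le> K"
  shows "\<exists>A \<subseteq> J. \<bar>sum w A - sum w (J - A)\<bar> \<le> K"
  using assms
proof (induction J rule: finite_induct)
  case empty then show ?case by auto
next
  case (insert j J)
  then obtain A where A: "A \<subseteq> J" "\<bar>sum w A - sum w (J - A)\<bar> \<le> K" by auto
  have wj: "0 \<le> w j" "w j \<le> K" using insert.prems by auto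
  have fA: "finite A" using A(1) insert.hyps(1) finite_subset by blast
  have jA: "j \<notin> A" using A(1) insert.hyps(2) by blast
  show ?case
  proof (cases "sum w A - sum w (J - A) \<ge> 0")
    case True
    have "insert j J - A = insert j (J - A)" using jA by auto
    then have "sum w (insert j J - A) = w j + sum w (J - A)"
      using insert.hyps by simp
    then have "\<bar>sum w A - sum w (insert j J - A)\<bar> \<le> K" using True A(2) wj by linarith
    then show ?thesis using A(1) by blast
  next
    case False
    have "insert j J - insert j A = J - A" using A(1) insert.hyps by auto
    moreover have "sum w (insert j A) = w j + sum w A" using fA jA by simp
    ultimately have "\<bar>sum w (insert j A) - sum w (insert j J - insert j A)\<bar> \<le> K"
      using False A(2) wj by simp
    then show ?thesis using A(1) by (intro exI[of _ "insert j A"]) auto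
  qed
qed

lemma triangle_point:
  fixes M0 a b :: real
  assumes "M0 > 0" "0 \<le> a" "0 \<le> b" "M0 \<le> a + b" "\<bar>a - b\<bar> \<le> M0"
  shows "\<exists>x y. x\<^sup>2 + y\<^sup>2 = a\<^sup>2 \<and> (M0 - x)\<^sup>2 + y\<^sup>2 = b\<^sup>2"
proof -
  define x where "x = (M0\<^sup>2 + a\<^sup>2 - b\<^sup>2) / (2 * M0)"
  have h1: "M0\<^sup>2 + a\<^sup>2 - b\<^sup>2 \<le> 2 * M0 * a"
  proof -
    have "(M0 - a)\<^sup>2 \<le> b\<^sup>2" using assms by (subst abs_le_square_iff[symmetric]) auto
    then show ?thesis by (simp add: power2_diff)
  qed
  have h2: "- (2 * M0 * a) \<le> M0\<^sup>2 + a\<^sup>2 - b\<^sup>2"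
  proof -
    have "b\<^sup>2 \<le> (M0 + a)\<^sup>2" using assms by (intro power_mono) auto
    then show ?thesis by (simp add: power2_sum)
  qed
  have "\<bar>x\<bar> \<le> a"
    using h1 h2 assms unfolding x_def by (auto simp: abs_le_iff field_simps)
  then have xa: "x\<^sup>2 \<le> a\<^sup>2" by (metis abs_le_square_iff abs_of_nonneg assms(2))
  define y where "y = sqrt (a\<^sup>2 - x\<^sup>2)"
  have y2: "y\<^sup>2 = a\<^sup>2 - x\<^sup>2" using xa by (simp add: y_def)
  have "(M0 - x)\<^sup>2 + y\<^sup>2 = M0\<^sup>2 - 2 * M0 * x + a\<^sup>2" using y2 by (simp add: power2_diff)
  also have "2 * M0 * x = M0\<^sup>2 + a\<^sup>2 - b\<^sup>2" using assms(1) by (simp add: x_def)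
  finally have "(M0 - x)\<^sup>2 + y\<^sup>2 = b\<^sup>2" by simp
  moreover have "x\<^sup>2 + y\<^sup>2 = a\<^sup>2" using y2 by simp
  ultimately show ?thesis by blast
qed



lemma sum_identity:
  fixes w c s :: "nat \<Rightarrow> real"
  shows "(\<Sum>i<d. w i * (1/2 + (c i * a + s i * b)/2)) = (\<Sum>i<d. w i)/2 + (a * (\<Sum>i<d. w i * c i) + b * (\<Sum>i<d. w i * s i))/2"
proof -
  have "(\<Sum>i<d. w i * (1/2 + (c i * a + s i * b)/2)) = (\<Sum>i<d. w i / 2 + a * (w i * c i) / 2 + b * (w i * s i) / 2)"
    by (intro sum.cong) (auto simp: algebra_simps)
  also have "\<dots> = (\<Sum>i<d. w i)/2 + (a * (\<Sum>i<d. w i * c i) + b * (\<Sum>i<d. w i * s i))/2"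
    by (simp add: sum.distrib sum_divide_distrib[symmetric] sum_distrib_left[symmetric] add_divide_distrib)
  finally show ?thesis .
qed

lemma construct:
  fixes w c s :: "nat \<Rightarrow> real"
  assumes cs: "\<And>i. i < d \<Longrightarrow> (c i)\<^sup>2 + (s i)\<^sup>2 = 1"
    and sc: "(\<Sum>i<d. w i * c i) = 0" and ss: "(\<Sum>i<d. w i * s i) = 0"
  shows "w_CM_law d w (distr PP (PiM {..<d} (\<lambda>_. borel)) (\<lambda>q. \<lambda>i\<in>{..<d}. 1/2 + (c i * fst q + s i * snd q)/2))"
proof -
  define F where "F = (\<lambda>q. \<lambda>i\<in>{..<d}. 1/2 + (c i * fst q + s i * snd q)/2)"
  have comp[measurable]: "(\<lambda>q. 1/2 + (c i * fst q + s i * snd q)/2) \<in> measurable PP borel" for i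
    by (intro meas_PP borel_measurable_continuous_onI continuous_intros) auto
  have Fm[measurable]: "F \<in> measurable PP (PiM {..<d} (\<lambda>_. borel))"
    unfolding F_def by (rule measurable_restrict) (rule comp)
  interpret P: prob_space PP by (rule prob_space_PP)
  have "prob_space (distr PP (PiM {..<d} (\<lambda>_. borel)) F)"
    by (rule P.prob_space_distr[OF Fm])
  moreover have "sets (distr PP (PiM {..<d} (\<lambda>_. borel)) F) = sets (PiM {..<d} (\<lambda>_. borel))" by simp
  moreover have "distr (distr PP (PiM {..<d} (\<lambda>_. borel)) F) borel (\<lambda>x. x i) = uniform_measure lborel {0..1}"
    if i: "i < d" for i
  proof -
    have "distr (distr PP (PiM {..<d} (\<lambda>_. borel)) F) borel (\<lambda>x. x i) = distr PP borel ((\<lambda>x. x i) \<circ> F)"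
      by (rule distr_distr) (use i in auto)
    also have "(\<lambda>x. x i) \<circ> F = (\<lambda>q. 1/2 + (c i * fst q + s i * snd q)/2)"
      using i by (auto simp: F_def)
    finally show ?thesis using PP_dir[OF cs[OF i]] by simp
  qed
  moreover have "AE x in distr PP (PiM {..<d} (\<lambda>_. borel)) F. (\<Sum>i<d. w i * x i) = (\<Sum>i<d. w i) / 2"
  proof (subst AE_distr_iff[OF Fm])
    show "{x \<in> space (PiM {..<d} (\<lambda>_. borel)). (\<Sum>i<d. w i * x i) = (\<Sum>i<d. w i) / 2} \<in> sets (PiM {..<d} (\<lambda>_. borel))"
      by measurable
    show "AE x in PP. (\<Sum>i<d. w i * F x i) = (\<Sum>i<d. w i) / 2"
    proof (rule AE_I2)
      fix q
      have "(\<Sum>i<d. w i * F q i) = (\<Sum>i<d. w i * (1/2 + (c i * fst q + s i * snd q)/2))"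
        by (intro sum.cong) (auto simp: F_def)
      also have "\<dots> = (\<Sum>i<d. w i)/2" unfolding sum_identity sc ss by simp
      finally show "(\<Sum>i<d. w i * F q i) = (\<Sum>i<d. w i) / 2" .
    qed
  qed
  ultimately show ?thesis unfolding w_CM_law_def F_def by blast
qed



lemma directions:
  fixes d :: nat and w :: "nat \<Rightarrow> real"
  assumes "d \<ge> 2" and wpos: "\<And>i. i < d \<Longrightarrow> w i > 0"
    and hyp: "Max (w ` {..<d}) \<le> (\<Sum>i<d. w i) - Max (w ` {..<d})"
  shows "\<exists>c s. (\<forall>i<d. (c i)\<^sup>2 + (s i)\<^sup>2 = 1) \<and> (\<Sum>i<d. w i * c i) = 0 \<and> (\<Sum>i<d. w i * s i) = 0"
proof -
  have ne: "w ` {..<d} \<noteq> {}" using assms(1) by (auto simp: lessThan_empty_iff)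
  obtain m where m: "m < d" "w m = Max (w ` {..<d})"
    using Max_in[OF _ ne] by auto
  define I where "I = {..<d} - {m}"
  have fI: "finite I" by (simp add: I_def)
  have wI: "0 \<le> w i \<and> w i \<le> w m" if "i \<in> I" for i
  proof -
    have i: "i < d" "i \<noteq> m" using that by (auto simp: I_def)
    have "w i \<le> Max (w ` {..<d})" using i by (intro Max_ge) auto
    then show ?thesis using wpos[OF i(1)] m(2) by simp
  qed
  obtain A where A: "A \<subseteq> I" "\<bar>sum w A - sum w (I - A)\<bar> \<le> w m"
  proof -
    have wm0: "0 \<le> w m" using wpos[OF m(1)] by simp
    have "\<exists>A'. A' \<subseteq> I \<and> \<bar>sum w A' - sum w (I - A')\<bar> \<le> w m"
      by (rule greedy_partition[OF fI wI wm0])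
    then obtain A' where A': "A' \<subseteq> I \<and> \<bar>sum w A' - sum w (I - A')\<bar> \<le> w m"
      by (rule exE)
    show ?thesis by (rule that[OF conjunct1[OF A'] conjunct2[OF A']])
  qed
  define B where "B = I - A"
  define a where "a = sum w A"
  define b where "b = sum w B"
  have fA: "finite A" using A(1) fI finite_subset by blast
  have fB: "finite B" using fI by (simp add: B_def)
  have AB: "A \<inter> B = {}" "I = A \<union> B" using A(1) by (auto simp: B_def)
  have dsplit: "{..<d} = insert m (A \<union> B)" "m \<notin> A \<union> B" using m(1) AB(2) by (auto simp: I_def)
  have a0: "0 \<le> a" unfolding a_def using wI A(1) by (intro sum_nonneg) auto
  have b0: "0 \<le> b" unfolding b_def using wI by (intro sum_nonneg) (auto simp: B_def)
  have S: "(\<Sum>i<d. w i) = w m + a + b"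
    unfolding dsplit(1) a_def b_def using dsplit(2) fA fB AB(1) by (simp add: sum.union_disjoint)
  have tri: "w m \<le> a + b" using hyp m S by simp
  have wm: "w m > 0" using wpos[OF m(1)] .
  obtain x y where xy: "x\<^sup>2 + y\<^sup>2 = a\<^sup>2" "(w m - x)\<^sup>2 + y\<^sup>2 = b\<^sup>2"
  proof -
    have ab: "\<bar>a - b\<bar> \<le> w m" using A(2) unfolding a_def b_def B_def .
    show ?thesis using triangle_point[OF wm a0 b0 tri ab] that by blast
  qed
  have az: "x = 0 \<and> y = 0" if "a = 0"
  proof -
    have "x\<^sup>2 + y\<^sup>2 = 0" using xy(1) that by simp
    then show ?thesis by (simp only: sum_power2_eq_zero_iff)
  qed
  have bz: "w m - x = 0 \<and> y = 0" if "b = 0"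
  proof -
    have "(w m - x)\<^sup>2 + y\<^sup>2 = 0" using xy(2) that by simp
    then show ?thesis by (simp only: sum_power2_eq_zero_iff)
  qed
  define c where "c i = (if i = m then -1 else if i \<in> A then x / a else (w m - x) / b)" for i
  define s where "s i = (if i = m then 0 else if i \<in> A then y / a else - y / b)" for i
  have apos: "a > 0" if "i \<in> A" for i
  proof -
    have "w i \<le> a" unfolding a_def
    proof (rule member_le_sum[OF that _ fA])
      fix x assume "x \<in> A - {i}"
      then have "x \<in> I" using A(1) by blast
      then show "0 \<le> w x" using wI by blast
    qed
    moreover have "i \<in> I" using that A(1) by blast
    then have "i < d" by (simp add: I_def)
    then have "w i > 0" by (rule wpos)
    ultimately show ?thesis by linarith
  qed
  have bpos: "b > 0" if "i \<in> B" for i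
  proof -
    have BI: "B \<subseteq> I" by (simp add: B_def)
    have "w i \<le> b" unfolding b_def
    proof (rule member_le_sum[OF that _ fB])
      fix x assume "x \<in> B - {i}"
      then have "x \<in> I" using BI by blast
      then show "0 \<le> w x" using wI by blast
    qed
    moreover have "i \<in> I" using that BI by blast
    then have "i < d" by (simp add: I_def)
    then have "w i > 0" by (rule wpos)
    ultimately show ?thesis by linarith
  qed
  have unit: "(c i)\<^sup>2 + (s i)\<^sup>2 = 1" if "i < d" for i
  proof -
    have "i \<in> {..<d}" using that by simp
    then have iin: "i \<in> insert m (A \<union> B)" unfolding dsplit(1) .
    consider "i = m" | "i \<noteq> m" "i \<in> A" | "i \<noteq> m" "i \<in> B" using iin by blast
    then show ?thesis
    proof cases
      case 1 then show ?thesis by (simp add: c_def s_def)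
    next
      case 2
      have ci: "c i = x / a" "s i = y / a" using 2 by (simp_all add: c_def s_def)
      have "(x/a)\<^sup>2 + (y/a)\<^sup>2 = (x\<^sup>2 + y\<^sup>2) / a\<^sup>2" by (simp add: power_divide add_divide_distrib)
      also have "\<dots> = a\<^sup>2 / a\<^sup>2" by (simp only: xy(1))
      also have "\<dots> = 1" using apos[OF 2(2)] by simp
      finally show ?thesis unfolding ci .
    next
      case 3
      then have "i \<notin> A" using AB(1) by blast
      have ci: "c i = (w m - x) / b" "s i = - y / b" using 3 \<open>i \<notin> A\<close> by (simp_all add: c_def s_def)
      have "((w m - x)/b)\<^sup>2 + (-y/b)\<^sup>2 = ((w m - x)\<^sup>2 + y\<^sup>2) / b\<^sup>2" by (simp add: power_divide add_divide_distrib)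
      also have "\<dots> = b\<^sup>2 / b\<^sup>2" by (simp only: xy(2))
      also have "\<dots> = 1" using bpos[OF 3(2)] by simp
      finally show ?thesis unfolding ci .
    qed
  qed
  have mA: "m \<notin> A" "m \<notin> B" using dsplit(2) by auto
  have sumsplit: "(\<Sum>i<d. f i) = f m + sum f A + sum f B" for f :: "nat \<Rightarrow> real"
    unfolding dsplit(1) using dsplit(2) fA fB AB(1) by (simp add: sum.union_disjoint)
  have cA: "sum (\<lambda>i. w i * c i) A = x"
  proof -
    have "sum (\<lambda>i. w i * c i) A = sum (\<lambda>i. w i * (x / a)) A"
      using mA by (intro sum.cong) (auto simp: c_def)
    also have "\<dots> = a * (x / a)" by (simp only: sum_distrib_right[symmetric] a_def[symmetric])
    also have "\<dots> = x" using az by (cases "a = 0") auto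
    finally show ?thesis .
  qed
  have cB: "sum (\<lambda>i. w i * c i) B = w m - x"
  proof -
    have "sum (\<lambda>i. w i * c i) B = sum (\<lambda>i. w i * ((w m - x) / b)) B"
      using mA AB(1) by (intro sum.cong) (auto simp: c_def)
    also have "\<dots> = b * ((w m - x) / b)" by (simp only: sum_distrib_right[symmetric] b_def[symmetric])
    also have "\<dots> = w m - x" using bz by (cases "b = 0") auto
    finally show ?thesis .
  qed
  have sA: "sum (\<lambda>i. w i * s i) A = y"
  proof -
    have "sum (\<lambda>i. w i * s i) A = sum (\<lambda>i. w i * (y / a)) A"
      using mA by (intro sum.cong) (auto simp: s_def)
    also have "\<dots> = a * (y / a)" by (simp only: sum_distrib_right[symmetric] a_def[symmetric])
    also have "\<dots> = y" using az by (cases "a = 0") auto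
    finally show ?thesis .
  qed
  have sB: "sum (\<lambda>i. w i * s i) B = - y"
  proof -
    have "sum (\<lambda>i. w i * s i) B = sum (\<lambda>i. w i * (- y / b)) B"
      using mA AB(1) by (intro sum.cong) (auto simp: s_def)
    also have "\<dots> = b * (- y / b)" by (simp only: sum_distrib_right[symmetric] b_def[symmetric])
    also have "\<dots> = - y" using bz by (cases "b = 0") auto
    finally show ?thesis .
  qed
  have "(\<Sum>i<d. w i * c i) = 0" unfolding sumsplit[of "\<lambda>i. w i * c i"] cA cB by (simp add: c_def)
  moreover have "(\<Sum>i<d. w i * s i) = 0" unfolding sumsplit[of "\<lambda>i. w i * s i"] sA sB by (simp add: s_def)
  ultimately show ?thesis using unit by blast
qed

lemma sufficiency:
  fixes d :: nat and w :: "nat \<Rightarrow> real"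
  assumes "d \<ge> 2" and "\<And>i. i < d \<Longrightarrow> w i > 0"
    and "Max (w ` {..<d}) \<le> (\<Sum>i<d. w i) - Max (w ` {..<d})"
  shows "\<exists>M. w_CM_law d w M"
proof -
  obtain c s where cs: "\<forall>i<d. (c i)\<^sup>2 + (s i)\<^sup>2 = 1" "(\<Sum>i<d. w i * c i) = 0" "(\<Sum>i<d. w i * s i) = 0"
    using directions[OF assms] by blast
  have "w_CM_law d w (distr PP (PiM {..<d} (\<lambda>_. borel)) (\<lambda>q. \<lambda>i\<in>{..<d}. 1/2 + (c i * fst q + s i * snd q)/2))"
    by (rule construct) (use cs in auto)
  then show ?thesis by blast
qed




lemma cU_val: "\<exists>c>0. (\<integral>\<^sup>+t. ennreal \<bar>t - 1/2\<bar> \<partial>uniform_measure lborel {0..1::real}) = ennreal c"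
proof -
  let ?I = "\<integral>\<^sup>+t. ennreal \<bar>t - 1/2\<bar> * indicator {0..1} t \<partial>(lborel::real measure)"
  have eq: "(\<integral>\<^sup>+t. ennreal \<bar>t - 1/2\<bar> \<partial>uniform_measure lborel {0..1::real}) = ?I"
    by (subst nn_integral_uniform_measure) (auto simp: divide_ennreal_def)
  have up: "?I \<le> ennreal (1/2)"
  proof -
    have "?I \<le> (\<integral>\<^sup>+t. ennreal (1/2) * indicator {0..1} t \<partial>(lborel::real measure))"
    proof (intro nn_integral_mono)
      fix x :: real
      have "ennreal \<bar>x - 1/2\<bar> \<le> ennreal (1/2)" if "0 \<le> x" "x \<le> 1"
      proof -
        have "\<bar>x - 1/2\<bar> \<le> 1/2" using that unfolding abs_le_iff by linarith
        then show ?thesis by (rule ennreal_leI)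
      qed
      then show "ennreal \<bar>x - 1/2\<bar> * indicator {0..1} x \<le> ennreal (1/2) * indicator {0..1} x"
        by (auto simp: indicator_def simp del: ennreal_half)
    qed
    also have "\<dots> = ennreal (1/2)" by (simp add: nn_integral_cmult_indicator)
    finally show ?thesis .
  qed
  have lo: "ennreal (1/16) \<le> ?I"
  proof -
    have "ennreal (1/16) = (\<integral>\<^sup>+t. ennreal (1/4) * indicator {0..1/4} t \<partial>(lborel::real measure))"
      by (simp add: nn_integral_cmult_indicator ennreal_mult[symmetric])
    also have "\<dots> \<le> ?I"
      by (intro nn_integral_mono) (auto simp: indicator_def)
    finally show ?thesis .
  qed
  from up have "?I \<noteq> \<top>" by (auto simp: top_unique)
  then obtain c where c: "?I = ennreal c" "0 \<le> c" by (cases ?I) auto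
  then have "1/16 \<le> c" using lo by (simp add: ennreal_le_iff)
  then show ?thesis using eq c by (intro exI[of _ c]) auto
qed

lemma necessity:
  fixes d :: nat and w :: "nat \<Rightarrow> real"
  assumes "d \<ge> 2" and wpos: "\<And>i. i < d \<Longrightarrow> w i > 0" and law: "w_CM_law d w M"
  shows "Max (w ` {..<d}) \<le> (\<Sum>i<d. w i) - Max (w ` {..<d})"
proof -
  from law have sM: "sets M = sets (PiM {..<d} (\<lambda>_. borel))"
    and marg: "\<And>i. i < d \<Longrightarrow> distr M borel (\<lambda>x. x i) = uniform_measure lborel {0..1}"
    and ae: "AE x in M. (\<Sum>i<d. w i * x i) = (\<Sum>i<d. w i) / 2"
    unfolding w_CM_law_def by auto
  have ne: "w ` {..<d} \<noteq> {}" using assms(1) by (auto simp: lessThan_empty_iff)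
  obtain m where m: "m < d" "w m = Max (w ` {..<d})"
    using Max_in[OF _ ne] by auto
  define I where "I = {..<d} - {m}"
  have fI: "finite I" by (simp add: I_def)
  have comp: "(\<lambda>x. x i) \<in> measurable M borel" if "i < d" for i
  proof -
    have "(\<lambda>x. x i) \<in> measurable (PiM {..<d} (\<lambda>_. borel)) borel"
      using that by (intro measurable_component_singleton) simp
    then show ?thesis by (subst measurable_cong_sets[OF sM refl])
  qed
  obtain c where c: "c > 0" "(\<integral>\<^sup>+t. ennreal \<bar>t - 1/2\<bar> \<partial>uniform_measure lborel {0..1::real}) = ennreal c"
    using cU_val by blast
  have E: "(\<integral>\<^sup>+x. ennreal \<bar>x i - 1/2\<bar> \<partial>M) = ennreal c" if "i < d" for i
  proof -
    have "(\<integral>\<^sup>+x. ennreal \<bar>x i - 1/2\<bar> \<partial>M) = (\<integral>\<^sup>+t. ennreal \<bar>t - 1/2\<bar> \<partial>distr M borel (\<lambda>x. x i))"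
      by (rule nn_integral_distr[symmetric]) (auto intro: comp[OF that])
    then show ?thesis using marg[OF that] c by simp
  qed
  have dsplit: "{..<d} = insert m I" "m \<notin> I" using m(1) by (auto simp: I_def)
  have aeineq: "AE x in M. ennreal (w m * \<bar>x m - 1/2\<bar>) \<le> ennreal (\<Sum>i\<in>I. w i * \<bar>x i - 1/2\<bar>)"
    using ae
  proof eventually_elim
    case (elim x)
    have "(\<Sum>i<d. w i * (x i - 1/2)) = (\<Sum>i<d. w i * x i) - (\<Sum>i<d. w i) / 2"
      by (simp add: algebra_simps sum_subtractf sum_divide_distrib)
    then have "(\<Sum>i<d. w i * (x i - 1/2)) = 0" using elim by simp
    then have "w m * (x m - 1/2) = - (\<Sum>i\<in>I. w i * (x i - 1/2))"
      unfolding dsplit(1) using dsplit(2) fI by simp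
    then have "\<bar>w m * (x m - 1/2)\<bar> \<le> (\<Sum>i\<in>I. \<bar>w i * (x i - 1/2)\<bar>)"
      by (simp add: sum_abs)
    also have "\<dots> = (\<Sum>i\<in>I. w i * \<bar>x i - 1/2\<bar>)"
      using wpos by (intro sum.cong) (auto simp: I_def abs_mult less_imp_le)
    finally show ?case using wpos[OF m(1)] by (intro ennreal_leI) (simp add: abs_mult)
  qed
  have "ennreal (w m * c) = ennreal (w m) * (\<integral>\<^sup>+x. ennreal \<bar>x m - 1/2\<bar> \<partial>M)"
    using E[OF m(1)] wpos[OF m(1)] c by (simp add: ennreal_mult)
  also have "\<dots> = (\<integral>\<^sup>+x. ennreal (w m * \<bar>x m - 1/2\<bar>) \<partial>M)"
    using wpos[OF m(1)] by (subst nn_integral_cmult[symmetric]) (auto intro!: borel_measurable_abs borel_measurable_diff comp[OF m(1)] simp: ennreal_mult)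
  also have "\<dots> \<le> (\<integral>\<^sup>+x. ennreal (\<Sum>i\<in>I. w i * \<bar>x i - 1/2\<bar>) \<partial>M)"
    by (rule nn_integral_mono_AE[OF aeineq])
  also have "\<dots> = (\<integral>\<^sup>+x. (\<Sum>i\<in>I. ennreal (w i) * ennreal \<bar>x i - 1/2\<bar>) \<partial>M)"
  proof (intro nn_integral_cong)
    fix x :: "nat \<Rightarrow> real"
    have nn: "\<And>i. i \<in> I \<Longrightarrow> 0 \<le> w i" using wpos by (auto simp: I_def less_imp_le)
    have "ennreal (\<Sum>i\<in>I. w i * \<bar>x i - 1/2\<bar>) = (\<Sum>i\<in>I. ennreal (w i * \<bar>x i - 1/2\<bar>))"
      by (rule sum_ennreal[symmetric]) (simp add: nn)
    also have "\<dots> = (\<Sum>i\<in>I. ennreal (w i) * ennreal \<bar>x i - 1/2\<bar>)"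
      by (intro sum.cong refl) (simp add: ennreal_mult nn)
    finally show "ennreal (\<Sum>i\<in>I. w i * \<bar>x i - 1/2\<bar>) = (\<Sum>i\<in>I. ennreal (w i) * ennreal \<bar>x i - 1/2\<bar>)" .
  qed
  also have "\<dots> = (\<Sum>i\<in>I. (\<integral>\<^sup>+x. ennreal (w i) * ennreal \<bar>x i - 1/2\<bar> \<partial>M))"
  proof (rule nn_integral_sum)
    fix i assume "i \<in> I"
    then have [measurable]: "(\<lambda>x. x i) \<in> borel_measurable M" by (intro comp) (simp add: I_def)
    show "(\<lambda>x. ennreal (w i) * ennreal \<bar>x i - 1/2\<bar>) \<in> borel_measurable M" by measurable
  qed
  also have "\<dots> = (\<Sum>i\<in>I. ennreal (w i * c))"
  proof (intro sum.cong refl)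
    fix i assume "i \<in> I"
    then have i: "i < d" by (simp add: I_def)
    then have [measurable]: "(\<lambda>x. x i) \<in> borel_measurable M" by (intro comp)
    have "(\<integral>\<^sup>+x. ennreal (w i) * ennreal \<bar>x i - 1/2\<bar> \<partial>M) = ennreal (w i) * (\<integral>\<^sup>+x. ennreal \<bar>x i - 1/2\<bar> \<partial>M)"
      by (rule nn_integral_cmult) measurable
    also have "\<dots> = ennreal (w i * c)" using E[OF i] c(1) wpos[OF i] by (simp add: ennreal_mult)
    finally show "(\<integral>\<^sup>+x. ennreal (w i) * ennreal \<bar>x i - 1/2\<bar> \<partial>M) = ennreal (w i * c)" .
  qed
  also have "\<dots> = ennreal ((\<Sum>i\<in>I. w i) * c)"
    using c wpos by (subst sum_ennreal) (auto simp: I_def sum_distrib_right less_imp_le)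
  finally have le: "ennreal (w m * c) \<le> ennreal ((\<Sum>i\<in>I. w i) * c)" .
  have nnI: "0 \<le> (\<Sum>i\<in>I. w i) * c"
    using wpos c(1) by (intro mult_nonneg_nonneg sum_nonneg) (auto simp: I_def less_imp_le)
  have "w m * c \<le> (\<Sum>i\<in>I. w i) * c" using ennreal_le_iff[OF nnI] le by blast
  then have "w m \<le> (\<Sum>i\<in>I. w i)" using c by simp
  moreover have "(\<Sum>i<d. w i) = w m + (\<Sum>i\<in>I. w i)" unfolding dsplit(1) using dsplit(2) fI by simp
  ultimately show ?thesis using m by simp
qed


theorem mainTheorem8:
  fixes d :: nat and w :: "nat \<Rightarrow> real"
  assumes "d \<ge> 2" and "\<And>i. i < d \<Longrightarrow> w i > 0"
  shows "(\<exists>M. w_CM_law d w M) \<longleftrightarrow>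
         Max (w ` {..<d}) \<le> (\<Sum>i<d. w i) - Max (w ` {..<d})"
proof
  assume "\<exists>M. w_CM_law d w M"
  then obtain M where M: "w_CM_law d w M" by blast
  show "Max (w ` {..<d}) \<le> (\<Sum>i<d. w i) - Max (w ` {..<d})"
    by (rule necessity[of d w M, OF assms(1) assms(2) M])
next
  assume h: "Max (w ` {..<d}) \<le> (\<Sum>i<d. w i) - Max (w ` {..<d})"
  show "\<exists>M. w_CM_law d w M"
    by (rule sufficiency[of d w, OF assms(1) assms(2) h])
qed

end
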